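(* Let $\mathcal{U}$ be a $Sob$ effect algebra on a complex Hilbert space $H$. Then $\mathcal{U}$ is convex if and only if $A\in\mathcal{U}$ and $0\le\lambda\le1$ imply $\lambda A\in\mathcal{U}$.
   Context: $\mathcal{E}(H)$ is the set of effects ($0\le a\le I$). A sub-observable with outcome space $(\Omega,\mathcal{F})$ is a map $\mathcal{F}\to\mathcal{E}(H)$ countably additive in the strong operator topology; it is an observable if its value on $\Omega$ is $I$; $Sob(H)$ is the set of sub-observables, with pointwise linear operations. A subset $\mathcal{U}\subseteq Sob(H)$ all of whose elements have the same outcome space is a $Sob$ effect algebra if: (S1) there is an observable $Z\in\mathcal{U}$; (S2) $A\in\mathcal{U}$ implies $Z-A\in\mathcal{U}$; (S3) $A,B\in\mathcal{U}$ and $A+B\in Sob(H)$ imply $A+B\in\mathcal{U}$. A subset $\mathcal{V}\subseteq Sob(H)$ is convex if whenever $A_i\in\mathcal{V}$, $0\le\lambda_i\le1$ ($i=1,\dots,n$) and $\sum_{i=1}^n\lambda_i=1$, we have $\sum_{i=1}^n\lambda_iA_i\in\mathcal{V}$. *)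

theory Defs
  imports "HOL-Analysis.Analysis"
begin

class complex_vector = real_vector +
  fixes scaleC :: "complex \<Rightarrow> 'a \<Rightarrow> 'a" (infixr "*\<^sub>C" 75)
  assumes scaleC_add_right: "a *\<^sub>C (x + y) = a *\<^sub>C x + a *\<^sub>C y"
    and scaleC_add_left: "(a + b) *\<^sub>C x = a *\<^sub>C x + b *\<^sub>C x"
    and scaleC_scaleC: "a *\<^sub>C (b *\<^sub>C x) = (a * b) *\<^sub>C x"
    and scaleC_one: "1 *\<^sub>C x = x"
    and scaleR_scaleC: "r *\<^sub>R x = complex_of_real r *\<^sub>C x"

class complex_inner = complex_vector + real_normed_vector +
  fixes cinner :: "'a \<Rightarrow> 'a \<Rightarrow> complex"
  assumes cinner_commute: "cinner x y = cnj (cinner y x)"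
    and cinner_add_left: "cinner (x + y) z = cinner x z + cinner y z"
    and cinner_scaleC_left: "cinner (a *\<^sub>C x) y = cnj a * cinner x y"
    and cinner_self_norm: "cinner x x = complex_of_real ((norm x)\<^sup>2)"

class chilbert_space = complex_inner + complete_space

definition clinear :: "('a::complex_vector \<Rightarrow> 'b::complex_vector) \<Rightarrow> bool" where
  "clinear f \<longleftrightarrow> (\<forall>x y. f (x + y) = f x + f y) \<and> (\<forall>c x. f (c *\<^sub>C x) = c *\<^sub>C f x)"

definition bounded_clinear :: "('a::complex_inner \<Rightarrow> 'b::complex_inner) \<Rightarrow> bool" where
  "bounded_clinear f \<longleftrightarrow> clinear f \<and> (\<exists>K. \<forall>x. norm (f x) \<le> norm x * K)"

text \<open>An effect: a bounded operator a with 0 \<le> a \<le> I, i.e. the quadratic form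
  is real and lies between 0 and the norm squared (in a complex Hilbert space this
  forces self-adjointness).\<close>
definition effect :: "('h::chilbert_space \<Rightarrow> 'h) \<Rightarrow> bool" where
  "effect a \<longleftrightarrow> bounded_clinear a \<and>
     (\<forall>x. \<exists>r. cinner x (a x) = complex_of_real r \<and> 0 \<le> r \<and> r \<le> (norm x)\<^sup>2)"

text \<open>Maps are total on all subsets of the outcome set; outside the sigma-algebra
  they are fixed to 0 so that equality is determined by the values on F.\<close>
definition sub_observable :: "'w measure \<Rightarrow> ('w set \<Rightarrow> 'h::chilbert_space \<Rightarrow> 'h) \<Rightarrow> bool" where
  "sub_observable M A \<longleftrightarrow>
     (\<forall>E\<in>sets M. effect (A E)) \<and>
     (\<forall>E. E \<notin> sets M \<longrightarrow> A E = (\<lambda>_. 0)) \<and>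
     (\<forall>F. range F \<subseteq> sets M \<longrightarrow> disjoint_family F \<longrightarrow>
          (\<forall>x. (\<lambda>n. A (F n) x) sums A (\<Union>n. F n) x))"

definition Sob :: "'w measure \<Rightarrow> ('w set \<Rightarrow> 'h::chilbert_space \<Rightarrow> 'h) set" where
  "Sob M = {A. sub_observable M A}"

definition observable :: "'w measure \<Rightarrow> ('w set \<Rightarrow> 'h::chilbert_space \<Rightarrow> 'h) \<Rightarrow> bool" where
  "observable M A \<longleftrightarrow> sub_observable M A \<and> A (space M) = id"

definition Sob_effect_algebra :: "'w measure \<Rightarrow> ('w set \<Rightarrow> 'h::chilbert_space \<Rightarrow> 'h) set \<Rightarrow> bool" where
  "Sob_effect_algebra M U \<longleftrightarrow> U \<subseteq> Sob M \<and>
     (\<exists>Z\<in>U. observable M Z \<and> (\<forall>A\<in>U. (\<lambda>E x. Z E x - A E x) \<in> U)) \<and>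
     (\<forall>A\<in>U. \<forall>B\<in>U. (\<lambda>E x. A E x + B E x) \<in> Sob M \<longrightarrow> (\<lambda>E x. A E x + B E x) \<in> U)"

definition convex_sob :: "('w set \<Rightarrow> 'h::chilbert_space \<Rightarrow> 'h) set \<Rightarrow> bool" where
  "convex_sob V \<longleftrightarrow> (\<forall>(n::nat) A lam.
     (\<forall>i<n. A i \<in> V \<and> 0 \<le> lam i \<and> lam i \<le> (1::real)) \<and> (\<Sum>i<n. lam i) = 1 \<longrightarrow>
     (\<lambda>E x. \<Sum>i<n. lam i *\<^sub>R A i E x) \<in> V)"

end

theory Submission
  imports Defs
begin

lemma cinner_add_right': "cinner x (y + z) = cinner x y + cinner x (z::'a::complex_inner)"
  by (metis cinner_commute cinner_add_left complex_cnj_add)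

lemma cinner_scaleC_right': "cinner x (c *\<^sub>C y) = c * cinner x (y::'a::complex_inner)"
  by (metis cinner_commute cinner_scaleC_left complex_cnj_mult complex_cnj_cnj)

lemma cinner_scaleR_right': "cinner x (r *\<^sub>R y) = complex_of_real r * cinner x (y::'a::complex_inner)"
  by (simp add: scaleR_scaleC cinner_scaleC_right')

lemma scaleC_zero': "c *\<^sub>C (0::'a::complex_vector) = 0"
  using scaleC_add_right[of c "0::'a" 0] by simp

lemma scaleR_scaleC_comm': "l *\<^sub>R (c *\<^sub>C (y::'a::complex_vector)) = c *\<^sub>C (l *\<^sub>R y)"
  by (simp add: scaleR_scaleC scaleC_scaleC mult.commute)

definition qfb :: "('h::chilbert_space \<Rightarrow> 'h) \<Rightarrow> real \<Rightarrow> bool" where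
  "qfb a w \<longleftrightarrow> (\<forall>x. \<exists>r. cinner x (a x) = complex_of_real r \<and> 0 \<le> r \<and> r \<le> w * (norm x)\<^sup>2)"

lemma qfb_add: "qfb a w \<Longrightarrow> qfb b v \<Longrightarrow> qfb (\<lambda>x. a x + b x) (w + v)"
  unfolding qfb_def
proof (intro allI)
  fix x
  assume A: "\<forall>x. \<exists>r. cinner x (a x) = complex_of_real r \<and> 0 \<le> r \<and> r \<le> w * (norm x)\<^sup>2"
    and B: "\<forall>x. \<exists>r. cinner x (b x) = complex_of_real r \<and> 0 \<le> r \<and> r \<le> v * (norm x)\<^sup>2"
  obtain r where r: "cinner x (a x) = complex_of_real r" "0 \<le> r" "r \<le> w * (norm x)\<^sup>2" using A by blast
  obtain s where s: "cinner x (b x) = complex_of_real s" "0 \<le> s" "s \<le> v * (norm x)\<^sup>2" using B by blast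
  show "\<exists>r. cinner x (a x + b x) = complex_of_real r \<and> 0 \<le> r \<and> r \<le> (w + v) * (norm x)\<^sup>2"
    by (rule exI[of _ "r + s"]) (use r s in \<open>simp add: cinner_add_right' distrib_right\<close>)
qed

lemma qfb_scale: "qfb a w \<Longrightarrow> 0 \<le> l \<Longrightarrow> qfb (\<lambda>x. l *\<^sub>R a x) (l * w)"
  unfolding qfb_def
proof (intro allI)
  fix x
  assume A: "\<forall>x. \<exists>r. cinner x (a x) = complex_of_real r \<and> 0 \<le> r \<and> r \<le> w * (norm x)\<^sup>2"
    and l: "0 \<le> l"
  obtain r where r: "cinner x (a x) = complex_of_real r" "0 \<le> r" "r \<le> w * (norm x)\<^sup>2" using A by blast
  show "\<exists>r. cinner x (l *\<^sub>R a x) = complex_of_real r \<and> 0 \<le> r \<and> r \<le> (l * w) * (norm x)\<^sup>2"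
    by (rule exI[of _ "l * r"]) (use r l in \<open>simp add: cinner_scaleR_right' mult_left_mono mult.assoc\<close>)
qed

lemma qfb_zero: "qfb (\<lambda>x. 0) 0"
  unfolding qfb_def using cinner_add_right'[of _ 0 0] by (auto intro!: exI[of _ 0])

lemma qfb_mono: "qfb a w \<Longrightarrow> w \<le> v \<Longrightarrow> qfb a v"
  unfolding qfb_def by (meson mult_right_mono order.trans zero_le_power2)

lemma bcl_add: "bounded_clinear a \<Longrightarrow> bounded_clinear b \<Longrightarrow> bounded_clinear (\<lambda>x. a x + b x)"
  unfolding bounded_clinear_def clinear_def
proof (intro conjI allI)
  assume A: "((\<forall>x y. a (x + y) = a x + a y) \<and> (\<forall>c x. a (c *\<^sub>C x) = c *\<^sub>C a x)) \<and> (\<exists>K. \<forall>x. norm (a x) \<le> norm x * K)"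
    and B: "((\<forall>x y. b (x + y) = b x + b y) \<and> (\<forall>c x. b (c *\<^sub>C x) = c *\<^sub>C b x)) \<and> (\<exists>K. \<forall>x. norm (b x) \<le> norm x * K)"
  fix x y c
  show "a (x + y) + b (x + y) = a x + b x + (a y + b y)" using A B by (simp add: algebra_simps)
  show "a (c *\<^sub>C x) + b (c *\<^sub>C x) = c *\<^sub>C (a x + b x)" using A B by (simp add: scaleC_add_right)
next
  assume A: "((\<forall>x y. a (x + y) = a x + a y) \<and> (\<forall>c x. a (c *\<^sub>C x) = c *\<^sub>C a x)) \<and> (\<exists>K. \<forall>x. norm (a x) \<le> norm x * K)"
    and B: "((\<forall>x y. b (x + y) = b x + b y) \<and> (\<forall>c x. b (c *\<^sub>C x) = c *\<^sub>C b x)) \<and> (\<exists>K. \<forall>x. norm (b x) \<le> norm x * K)"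
  obtain K1 where K1: "\<forall>x. norm (a x) \<le> norm x * K1" using A by blast
  obtain K2 where K2: "\<forall>x. norm (b x) \<le> norm x * K2" using B by blast
  show "\<exists>K. \<forall>x. norm (a x + b x) \<le> norm x * K"
  proof (intro exI allI)
    fix x
    have "norm (a x + b x) \<le> norm (a x) + norm (b x)" by (rule norm_triangle_ineq)
    also have "\<dots> \<le> norm x * (K1 + K2)" using K1 K2 by (simp add: distrib_left add_mono)
    finally show "norm (a x + b x) \<le> norm x * (K1 + K2)" .
  qed
qed

lemma bcl_scale: "bounded_clinear a \<Longrightarrow> bounded_clinear (\<lambda>x. l *\<^sub>R a x)"
  unfolding bounded_clinear_def clinear_def
proof (intro conjI allI)
  assume A: "((\<forall>x y. a (x + y) = a x + a y) \<and> (\<forall>c x. a (c *\<^sub>C x) = c *\<^sub>C a x)) \<and> (\<exists>K. \<forall>x. norm (a x) \<le> norm x * K)"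
  fix x y c
  show "l *\<^sub>R a (x + y) = l *\<^sub>R a x + l *\<^sub>R a y" using A by (simp add: scaleR_add_right)
  show "l *\<^sub>R a (c *\<^sub>C x) = c *\<^sub>C (l *\<^sub>R a x)" using A by (simp add: scaleR_scaleC_comm')
next
  assume A: "((\<forall>x y. a (x + y) = a x + a y) \<and> (\<forall>c x. a (c *\<^sub>C x) = c *\<^sub>C a x)) \<and> (\<exists>K. \<forall>x. norm (a x) \<le> norm x * K)"
  obtain K1 where K1: "\<forall>x. norm (a x) \<le> norm x * K1" using A by blast
  show "\<exists>K. \<forall>x. norm (l *\<^sub>R a x) \<le> norm x * K"
  proof (intro exI allI)
    fix x
    have "norm (l *\<^sub>R a x) = \<bar>l\<bar> * norm (a x)" by simp
    also have "\<dots> \<le> \<bar>l\<bar> * (norm x * K1)" using K1 by (simp add: mult_left_mono)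
    finally show "norm (l *\<^sub>R a x) \<le> norm x * (\<bar>l\<bar> * K1)" by (simp add: algebra_simps)
  qed
qed

lemma bcl_zero: "bounded_clinear (\<lambda>x::'a::complex_inner. 0::'b::complex_inner)"
  unfolding bounded_clinear_def clinear_def by (auto simp: scaleC_zero' intro!: exI[of _ 0])

definition SOw :: "'w measure \<Rightarrow> ('w set \<Rightarrow> 'h::chilbert_space \<Rightarrow> 'h) \<Rightarrow> real \<Rightarrow> bool" where
  "SOw M A w \<longleftrightarrow>
     (\<forall>E\<in>sets M. bounded_clinear (A E) \<and> qfb (A E) w) \<and>
     (\<forall>E. E \<notin> sets M \<longrightarrow> A E = (\<lambda>_. 0)) \<and>
     (\<forall>F. range F \<subseteq> sets M \<longrightarrow> disjoint_family F \<longrightarrow>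
          (\<forall>x. (\<lambda>n. A (F n) x) sums A (\<Union>n. F n) x))"

lemma SOw_Sob:
  assumes "SOw M A w" "w \<le> 1" shows "A \<in> Sob M"
proof -
  have "\<forall>E\<in>sets M. effect (A E)"
  proof
    fix E assume "E \<in> sets M"
    then have "bounded_clinear (A E)" "qfb (A E) 1"
      using assms qfb_mono unfolding SOw_def by blast+
    then show "effect (A E)" unfolding effect_def qfb_def by simp
  qed
  then show ?thesis using assms(1) unfolding SOw_def Sob_def sub_observable_def by simp
qed

lemma Sob_SOw: "A \<in> Sob M \<Longrightarrow> SOw M A 1"
  unfolding SOw_def Sob_def sub_observable_def effect_def qfb_def by simp

lemma SOw_add:
  assumes a: "SOw M A w" and b: "SOw M B v" shows "SOw M (\<lambda>E x. A E x + B E x) (w + v)"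
  unfolding SOw_def
proof (intro conjI allI impI ballI)
  fix E assume "E \<in> sets M"
  then show "bounded_clinear (\<lambda>x. A E x + B E x)" "qfb (\<lambda>x. A E x + B E x) (w + v)"
    using a b unfolding SOw_def by (simp_all add: bcl_add qfb_add)
next
  fix E assume "E \<notin> sets M"
  then show "(\<lambda>x. A E x + B E x) = (\<lambda>_. 0)" using a b unfolding SOw_def by simp
next
  fix F :: "nat \<Rightarrow> _" and x assume "range F \<subseteq> sets M" "disjoint_family F"
  then show "(\<lambda>n. A (F n) x + B (F n) x) sums (A (\<Union>n. F n) x + B (\<Union>n. F n) x)"
    using a b unfolding SOw_def by (intro sums_add) simp_all
qed

lemma SOw_scale:
  assumes a: "SOw M A w" and l: "0 \<le> l" shows "SOw M (\<lambda>E x. l *\<^sub>R A E x) (l * w)"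
  unfolding SOw_def
proof (intro conjI allI impI ballI)
  fix E assume "E \<in> sets M"
  then show "bounded_clinear (\<lambda>x. l *\<^sub>R A E x)" "qfb (\<lambda>x. l *\<^sub>R A E x) (l * w)"
    using a l unfolding SOw_def by (simp_all add: bcl_scale qfb_scale)
next
  fix E assume "E \<notin> sets M"
  then show "(\<lambda>x. l *\<^sub>R A E x) = (\<lambda>_. 0)" using a unfolding SOw_def by simp
next
  fix F :: "nat \<Rightarrow> _" and x assume "range F \<subseteq> sets M" "disjoint_family F"
  then show "(\<lambda>n. l *\<^sub>R A (F n) x) sums (l *\<^sub>R A (\<Union>n. F n) x)"
    using a unfolding SOw_def by (intro sums_scaleR_right) simp
qed

lemma SOw_zero: "SOw M (\<lambda>E x. 0) 0"
  unfolding SOw_def by (simp add: bcl_zero qfb_zero)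

theorem theorem3p5:
  fixes M :: "'w measure" and U :: "('w set \<Rightarrow> 'h::chilbert_space \<Rightarrow> 'h) set"
  assumes "Sob_effect_algebra M U"
  shows "convex_sob U \<longleftrightarrow>
    (\<forall>A\<in>U. \<forall>l::real. 0 \<le> l \<and> l \<le> 1 \<longrightarrow> (\<lambda>E x. l *\<^sub>R A E x) \<in> U)"
proof -
  have US: "U \<subseteq> Sob M" using assms unfolding Sob_effect_algebra_def by blast
  have cl: "\<And>A B. A \<in> U \<Longrightarrow> B \<in> U \<Longrightarrow> (\<lambda>E x. A E x + B E x) \<in> Sob M \<Longrightarrow> (\<lambda>E x. A E x + B E x) \<in> U"
    using assms unfolding Sob_effect_algebra_def by blast
  obtain Z where Z: "Z \<in> U" "\<And>A. A \<in> U \<Longrightarrow> (\<lambda>E x. Z E x - A E x) \<in> U"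
    using assms unfolding Sob_effect_algebra_def by blast
  have zero: "(\<lambda>E x. 0) \<in> U" using Z by fastforce
  show ?thesis
  proof
    assume cv: "convex_sob U"
    show "\<forall>A\<in>U. \<forall>l::real. 0 \<le> l \<and> l \<le> 1 \<longrightarrow> (\<lambda>E x. l *\<^sub>R A E x) \<in> U"
    proof (intro ballI allI impI)
      fix A and l :: real
      assume A: "A \<in> U" and l: "0 \<le> l \<and> l \<le> 1"
      define AA where "AA = (\<lambda>i::nat. if i = 0 then A else (\<lambda>E x. 0))"
      define lam where "lam = (\<lambda>i::nat. if i = 0 then l else 1 - l)"
      have "(\<lambda>E x. \<Sum>i<2. lam i *\<^sub>R AA i E x) \<in> U"
        using cv unfolding convex_sob_def
        apply (erule_tac x=2 in allE, erule_tac x=AA in allE, erule_tac x=lam in allE)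
        using A zero l by (auto simp: AA_def lam_def numeral_2_eq_2 less_Suc_eq)
      then show "(\<lambda>E x. l *\<^sub>R A E x) \<in> U"
        by (simp add: AA_def lam_def numeral_2_eq_2)
    qed
  next
    assume sc: "\<forall>A\<in>U. \<forall>l::real. 0 \<le> l \<and> l \<le> 1 \<longrightarrow> (\<lambda>E x. l *\<^sub>R A E x) \<in> U"
    show "convex_sob U"
      unfolding convex_sob_def
    proof (intro allI impI)
      fix n :: nat and A :: "nat \<Rightarrow> 'w set \<Rightarrow> 'h \<Rightarrow> 'h" and lam :: "nat \<Rightarrow> real"
      assume h: "(\<forall>i<n. A i \<in> U \<and> 0 \<le> lam i \<and> lam i \<le> 1) \<and> (\<Sum>i<n. lam i) = 1"
      have "k \<le> n \<Longrightarrow> (\<lambda>E x. \<Sum>i<k. lam i *\<^sub>R A i E x) \<in> U \<and> SOw M (\<lambda>E x. \<Sum>i<k. lam i *\<^sub>R A i E x) (\<Sum>i<k. lam i)" for k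
      proof (induction k)
        case 0
        then show ?case using zero SOw_zero by simp
      next
        case (Suc k)
        then have IH: "(\<lambda>E x. \<Sum>i<k. lam i *\<^sub>R A i E x) \<in> U"
          "SOw M (\<lambda>E x. \<Sum>i<k. lam i *\<^sub>R A i E x) (\<Sum>i<k. lam i)" by auto
        have kn: "k < n" using Suc by simp
        have Ak: "A k \<in> U" "0 \<le> lam k" "lam k \<le> 1" using h kn by auto
        have s1: "(\<lambda>E x. lam k *\<^sub>R A k E x) \<in> U" using sc Ak by blast
        have s2: "SOw M (\<lambda>E x. lam k *\<^sub>R A k E x) (lam k * 1)"
          using SOw_scale[OF Sob_SOw] Ak US by blast
        have sw: "SOw M (\<lambda>E x. (\<Sum>i<k. lam i *\<^sub>R A i E x) + lam k *\<^sub>R A k E x) (\<Sum>i<Suc k. lam i)"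
          using SOw_add[OF IH(2) s2] by simp
        have le: "(\<Sum>i<Suc k. lam i) \<le> 1"
        proof -
          have "(\<Sum>i<Suc k. lam i) \<le> (\<Sum>i<n. lam i)"
            using kn h by (intro sum_mono2) auto
          then show ?thesis using h by simp
        qed
        have "(\<lambda>E x. (\<Sum>i<k. lam i *\<^sub>R A i E x) + lam k *\<^sub>R A k E x) \<in> U"
          using cl[OF IH(1) s1] SOw_Sob[OF sw le] by simp
        then show ?case using sw by simp
      qed
      then show "(\<lambda>E x. \<Sum>i<n. lam i *\<^sub>R A i E x) \<in> U" by blast
    qed
  qed
qed

end
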